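(* For every integer $s\ge2$, $v^*_{RLP,2}=\tfrac12(\sqrt s+s)$.
   Context: Let $\Xi_2:=\{\xi\in\mathbb R^s:\|\xi-\tfrac12\mathbb 1_s\|_2\le\tfrac12\}$, where $\mathbb 1_s$ is the all-ones vector. Define $v^*_{RLP,2}$ as the infimum of $\sup_{\xi\in\Xi_2}y(\xi)_s$ over all maps $y:\Xi_2\to\mathbb R^s$ satisfying, for all $\xi\in\Xi_2$: $y(\xi)_1\ge\max\{\xi_1,1-\xi_1\}$ and $y(\xi)_i\ge\max\{\xi_i,1-\xi_i\}+y(\xi)_{i-1}$ for $i=2,\dots,s$. *)

theory Defs
  imports Complex_Main "HOL-Library.Extended_Real"
begin

text \<open>Vectors in R^s are represented as functions nat => real, with
  coordinates indexed 1..s and all other coordinates equal to 0.\<close>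

definition Xi2 :: "nat \<Rightarrow> (nat \<Rightarrow> real) set" where
  "Xi2 s = {\<xi>. (\<forall>i. i \<notin> {1..s} \<longrightarrow> \<xi> i = 0) \<and>
                 sqrt (\<Sum>i=1..s. (\<xi> i - 1/2)^2) \<le> 1/2}"

definition feasible_RLP :: "nat \<Rightarrow> ((nat \<Rightarrow> real) \<Rightarrow> (nat \<Rightarrow> real)) \<Rightarrow> bool" where
  "feasible_RLP s y \<longleftrightarrow>
     (\<forall>\<xi>\<in>Xi2 s. y \<xi> 1 \<ge> max (\<xi> 1) (1 - \<xi> 1) \<and>
        (\<forall>i\<in>{2..s}. y \<xi> i \<ge> max (\<xi> i) (1 - \<xi> i) + y \<xi> (i - 1)))"

definition v_RLP2 :: "nat \<Rightarrow> ereal" where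
  "v_RLP2 s = (INF y\<in>{y. feasible_RLP s y}. (SUP \<xi>\<in>Xi2 s. ereal (y \<xi> s)))"

end

theory Submission
  imports Defs
begin

definition mm :: "real \<Rightarrow> real" where "mm x = max x (1 - x)"

lemma mm_abs: "mm x = 1/2 + \<bar>x - 1/2\<bar>"
  unfolding mm_def by auto

lemma lower_chain:
  assumes "feasible_RLP s y" "\<xi> \<in> Xi2 s"
  shows "k \<ge> 1 \<Longrightarrow> k \<le> s \<Longrightarrow> y \<xi> k \<ge> (\<Sum>i=1..k. mm (\<xi> i))"
proof (induction k)
  case 0 then show ?case by simp
next
  case (Suc k)
  show ?case
  proof (cases "k = 0")
    case True
    then show ?thesis using assms Suc.prems unfolding feasible_RLP_def mm_def by auto
  next
    case False
    then have "y \<xi> k \<ge> (\<Sum>i=1..k. mm (\<xi> i))" using Suc by auto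
    moreover have "y \<xi> (Suc k) \<ge> mm (\<xi> (Suc k)) + y \<xi> k"
      using assms Suc.prems False unfolding feasible_RLP_def mm_def
      by (metis One_nat_def Suc_1 Suc_le_mono atLeastAtMost_iff diff_Suc_1 not_one_le_zero
          Suc_leI neq0_conv)
    ultimately show ?thesis using False by (simp add:)
  qed
qed

lemma amgm: assumes "a > 0" shows "\<bar>d::real\<bar> \<le> (a * d^2 + 1/a) / 2"
proof -
  have "0 \<le> (a * \<bar>d\<bar> - 1)^2" by simp
  hence "0 \<le> a * (a * d^2 + 1/a - 2*\<bar>d\<bar>)" using assms
    by (simp add: power2_eq_square algebra_simps)
  hence "0 \<le> a * d^2 + 1/a - 2*\<bar>d\<bar>" using assms
    by (simp add: zero_le_mult_iff)
  thus ?thesis by simp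
qed

lemma upper_sum:
  assumes "\<xi> \<in> Xi2 s" "s \<ge> 2"
  shows "(\<Sum>i=1..s. mm (\<xi> i)) \<le> (sqrt (real s) + real s) / 2"
proof -
  define r where "r = sqrt (real s)"
  have r0: "r > 0" using assms(2) by (simp add: r_def)
  have rr: "r * r = real s" by (simp add: r_def)
  define a where "a = 2 * r"
  have a0: "a > 0" using r0 by (simp add: a_def)
  have "sqrt (\<Sum>i=1..s. (\<xi> i - 1/2)^2) \<le> 1/2" using assms(1) by (simp add: Xi2_def)
  hence S: "(\<Sum>i=1..s. (\<xi> i - 1/2)^2) \<le> 1/4"
    by (metis real_sqrt_le_iff real_sqrt_four real_sqrt_divide real_sqrt_one
        divide_inverse inverse_eq_divide mult_1 le_divide_eq_numeral1(1)
        power2_eq_square real_sqrt_pow2 sum_nonneg zero_le_power2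
        real_le_rsqrt)
  have "(\<Sum>i=1..s. mm (\<xi> i)) = real s / 2 + (\<Sum>i=1..s. \<bar>\<xi> i - 1/2\<bar>)"
    by (simp add: mm_abs sum.distrib)
  also have "(\<Sum>i=1..s. \<bar>\<xi> i - 1/2\<bar>) \<le> (\<Sum>i=1..s. (a * (\<xi> i - 1/2)^2 + 1/a)/2)"
    by (rule sum_mono) (rule amgm[OF a0])
  also have "\<dots> = (a * (\<Sum>i=1..s. (\<xi> i - 1/2)^2) + real s / a) / 2"
    by (simp add: sum_divide_distrib[symmetric] sum.distrib sum_distrib_left[symmetric])
  also have "\<dots> \<le> (a / 4 + real s / a) / 2"
    using S a0 by (simp add: divide_right_mono)
  also have "\<dots> = r / 2"
    using r0 rr unfolding a_def by (simp add: field_simps)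
  finally show ?thesis by (simp add: r_def)
qed

theorem lemma2:
  fixes s :: nat
  assumes "s \<ge> 2"
  shows "v_RLP2 s = ereal ((sqrt (real s) + real s) / 2)"
proof -
  define V where "V = (sqrt (real s) + real s) / 2"
  define r where "r = sqrt (real s)"
  have r0: "r > 0" using assms by (simp add: r_def)
  have rr: "r * r = real s" by (simp add: r_def)
  define xs :: "nat \<Rightarrow> real" where "xs i = (if i \<in> {1..s} then 1/2 + 1/(2*r) else 0)" for i
  have xsX: "xs \<in> Xi2 s"
  proof -
    have "(\<Sum>i=1..s. (xs i - 1/2)^2) = real s * (1/(2*r))^2"
      by (simp add: xs_def)
    also have "\<dots> = 1/4" using r0 rr assms by (simp add: field_simps power2_eq_square)
    finally have E: "(\<Sum>i=1..s. (xs i - 1/2)^2) = 1/4" .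
    have F: "sqrt (1/4::real) = 1/2" by (simp add: real_sqrt_divide)
    have "sqrt (\<Sum>i=1..s. (xs i - 1/2)^2) \<le> 1/2" by (simp only: E F order_refl)
    thus ?thesis unfolding Xi2_def by (auto simp: xs_def)
  qed
  have xsval: "(\<Sum>i=1..s. mm (xs i)) = V"
  proof -
    have "(\<Sum>i=1..s. mm (xs i)) = real s * (1/2 + 1/(2*r))"
      using r0 assms by (simp add: xs_def mm_def)
    also have "\<dots> = V" unfolding V_def r_def[symmetric] using r0 rr
      by (simp add: field_simps)
    finally show ?thesis .
  qed
  have lo: "ereal V \<le> v_RLP2 s"
    unfolding v_RLP2_def
  proof (rule INF_greatest)
    fix y assume "y \<in> {y. feasible_RLP s y}"
    hence "y xs s \<ge> V" using lower_chain[of s y xs s] xsX xsval assms by auto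
    thus "ereal V \<le> (SUP \<xi>\<in>Xi2 s. ereal (y \<xi> s))"
      by (intro SUP_upper2[OF xsX]) simp
  qed
  define y0 :: "(nat \<Rightarrow> real) \<Rightarrow> nat \<Rightarrow> real" where "y0 \<xi> k = (\<Sum>i=1..k. mm (\<xi> i))" for \<xi> k
  have feas: "feasible_RLP s y0"
    unfolding feasible_RLP_def
  proof (intro ballI conjI)
    fix \<xi> show "max (\<xi> 1) (1 - \<xi> 1) \<le> y0 \<xi> 1" by (simp add: y0_def mm_def)
    fix i assume "i \<in> {2..s}"
    then obtain k where k: "i = Suc k" "k \<ge> 1" by (metis Suc_le_D atLeastAtMost_iff Suc_1 Suc_le_mono)
    show "max (\<xi> i) (1 - \<xi> i) + y0 \<xi> (i - 1) \<le> y0 \<xi> i"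
      using k by (simp add: y0_def mm_def)
  qed
  have up: "v_RLP2 s \<le> ereal V"
    unfolding v_RLP2_def
  proof (rule INF_lower2)
    show "y0 \<in> {y. feasible_RLP s y}" using feas by simp
    show "(SUP \<xi>\<in>Xi2 s. ereal (y0 \<xi> s)) \<le> ereal V"
      using upper_sum assms by (intro SUP_least) (simp add: y0_def V_def)
  qed
  show ?thesis using lo up V_def by auto
qed

end
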